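(* Let $\Gamma$ be a gain operator on $\ell^\infty_+(\mathcal I)$ and assume: (i) $\Gamma$ satisfies the $\oplus$-MBI property; (ii) there is $\rho\in\mathcal K_\infty$ such that $\Sigma(\Gamma_\rho)$ is UGAS; (iii) the family $\{\gamma_{ij}^{-1}: ji\in E(\mathcal G)\}$ is pointwise equicontinuous; (iv) there is $\zeta\in\mathcal K_\infty$ such that for all $ji\in E(\mathcal G)$ and all $0\le s^1\le s^2$, $\mu_i(s^2_{|\mathcal I_i})-\mu_i(s^1_{|\mathcal I_i})\ge\zeta(s^2_j-s^1_j)$; (v) the path $\sigma_*(r):=\bigoplus_{n=0}^\infty\hat\Gamma^n(r\mathbf 1)$, $r\ge0$, is norm-continuous. Then for each $r\ge0$ the operator $s\mapsto r\mathbf 1\oplus\Gamma(s)$ has precisely one fixed point.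
   Context: Let $\mathcal I$ be a nonempty countable index set; $\ell^\infty_+(\mathcal I)$ is the cone of nonnegative real families $s=(s_i)_{i\in\mathcal I}$ with $\|s\|:=\sup_i|s_i|<\infty$, ordered componentwise; $\mathbf 1$ is the all-ones vector; $\oplus$ is the componentwise maximum, $\bigoplus$ the componentwise supremum. $\mathcal K$: continuous strictly increasing $\gamma:\mathbb R_+\to\mathbb R_+$ with $\gamma(0)=0$; $\mathcal K_\infty$: unbounded elements of $\mathcal K$, acting componentwise; $\mathcal{KL}$: continuous $\beta$ with $\beta(\cdot,t)\in\mathcal K$ and $\beta(r,\cdot)$ continuous strictly decreasing to $0$ for $r>0$. For $\mathcal J\subset\mathcal I$, $s_{|\mathcal J}$ agrees with $s$ on $\mathcal J$ and is $0$ elsewhere. Gain operator: for each $i$ a finite (possibly empty) $\mathcal I_i\subset\mathcal I\setminus\{i\}$; directed graph $\mathcal G$ with vertices $\mathcal I$ and edges $ji$, $j\in\mathcal I_i$; a pointwise equicontinuous family $\gamma_{ij}\in\mathcal K_\infty$ ($ji\in E(\mathcal G)$) (pointwise equicontinuity: for all $r_0\ge0$, $\varepsilon>0$ there is $\delta>0$ with $|f(r)-f(r_0)|\le\varepsilon$ whenever $|r-r_0|\le\delta$, for all members $f$); functions $\mu_i:\ell^\infty_+(\mathcal I)\to[0,\infty]$ with (M1) some $\xi\in\mathcal K_\infty$ has $\mu_i(0)=0$, $\mu_i(s)\ge\xi(\|s\|)$; (M2) $\mu_i$ monotone; (M3) for each finite $\mathcal J$, $\mu_i$ restricted to vectors vanishing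 off $\mathcal J$ is finite-valued and continuous; (M4) for each norm-bounded $A$ and $\varepsilon>0$ there is $\delta>0$ with $\sup_i|\mu_i(s_{|\mathcal I_i})-\mu_i(s^0_{|\mathcal I_i})|\le\varepsilon$ whenever $s^0\in A$, $\|s-s^0\|\le\delta$. $\Gamma_i(s):=\mu_i([\gamma_{ij}(s_j)]_{j\in\mathcal I_i})$ (argument zero outside $\mathcal I_i$). $\Gamma_\rho:=(\mathrm{id}+\rho)\circ\Gamma$, $\hat\Gamma(s):=s\oplus\Gamma(s)$. $\Sigma(T)$ is the system $s^{n+1}=T(s^n)$; UGAS: $\|T^n(s)\|\le\beta(\|s\|,n)$ for some $\beta\in\mathcal{KL}$. $\oplus$-MBI property: there is $\varphi\in\mathcal K_\infty$ such that for all $s,b$, $s\le b\oplus\Gamma(s)$ implies $\|s\|\le\varphi(\|b\|)$. *)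

theory Defs
  imports "HOL-Analysis.Analysis"
begin

definition linf_plus :: "('i \<Rightarrow> real) set" where
  "linf_plus = {s. (\<forall>i. 0 \<le> s i) \<and> bounded (range s)}"

definition nrm :: "('i \<Rightarrow> real) \<Rightarrow> real" where
  "nrm s = (SUP i. \<bar>s i\<bar>)"

definition restr :: "'i set \<Rightarrow> ('i \<Rightarrow> real) \<Rightarrow> ('i \<Rightarrow> real)" where
  "restr J s = (\<lambda>i. if i \<in> J then s i else 0)"

definition class_K :: "(real \<Rightarrow> real) \<Rightarrow> bool" where
  "class_K g \<longleftrightarrow> continuous_on {0..} g \<and> strict_mono_on {0..} g \<and> g 0 = 0"

definition class_Kinf :: "(real \<Rightarrow> real) \<Rightarrow> bool" where
  "class_Kinf g \<longleftrightarrow> class_K g \<and> (\<forall>M. \<exists>r\<ge>0. M \<le> g r)"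

definition class_KL :: "(real \<Rightarrow> real \<Rightarrow> real) \<Rightarrow> bool" where
  "class_KL \<beta> \<longleftrightarrow> continuous_on ({0..} \<times> {0..}) (\<lambda>(r,t). \<beta> r t)
     \<and> (\<forall>t\<ge>0. class_K (\<lambda>r. \<beta> r t))
     \<and> (\<forall>r>0. continuous_on {0..} (\<beta> r) \<and> strict_antimono_on {0..} (\<beta> r)
                \<and> ((\<beta> r) \<longlongrightarrow> 0) at_top)"

definition ptw_equicont :: "(real \<Rightarrow> real) set \<Rightarrow> bool" where
  "ptw_equicont F \<longleftrightarrow> (\<forall>r0\<ge>0. \<forall>\<epsilon>>0. \<exists>\<delta>>0. \<forall>f\<in>F. \<forall>r\<ge>0.
      \<bar>r - r0\<bar> \<le> \<delta> \<longrightarrow> \<bar>f r - f r0\<bar> \<le> \<epsilon>)"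

text \<open>Gain operator data: neighbour sets Ii, gains gam i j (edge ji, j in Ii i),
  aggregation functions mu i with values in [0,\<infinity>].\<close>

definition gain_operator ::
  "('i \<Rightarrow> 'i set) \<Rightarrow> ('i \<Rightarrow> 'i \<Rightarrow> real \<Rightarrow> real) \<Rightarrow> ('i \<Rightarrow> ('i \<Rightarrow> real) \<Rightarrow> ereal) \<Rightarrow> bool" where
  "gain_operator Ii gam mu \<longleftrightarrow>
     (\<forall>i. finite (Ii i) \<and> i \<notin> Ii i)
   \<and> (\<forall>i. \<forall>j\<in>Ii i. class_Kinf (gam i j))
   \<and> ptw_equicont {gam i j | i j. j \<in> Ii i}
   \<and> (\<forall>i. \<forall>s\<in>linf_plus. 0 \<le> mu i s)
   \<comment> \<open>(M1)\<close>
   \<and> (\<exists>\<xi>. class_Kinf \<xi> \<and> (\<forall>i. mu i (\<lambda>_. 0) = 0 \<and>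
          (\<forall>s\<in>linf_plus. ereal (\<xi> (nrm s)) \<le> mu i s)))
   \<comment> \<open>(M2)\<close>
   \<and> (\<forall>i. \<forall>s\<in>linf_plus. \<forall>t\<in>linf_plus. (\<forall>k. s k \<le> t k) \<longrightarrow> mu i s \<le> mu i t)
   \<comment> \<open>(M3)\<close>
   \<and> (\<forall>i. \<forall>J. finite J \<longrightarrow>
        (let V = {s\<in>linf_plus. \<forall>k. k \<notin> J \<longrightarrow> s k = 0} in
          (\<forall>s\<in>V. \<bar>mu i s\<bar> \<noteq> \<infinity>) \<and>
          (\<forall>s\<in>V. \<forall>\<epsilon>>0. \<exists>\<delta>>0. \<forall>t\<in>V. nrm (\<lambda>k. t k - s k) \<le> \<delta> \<longrightarrow>
               \<bar>real_of_ereal (mu i t) - real_of_ereal (mu i s)\<bar> \<le> \<epsilon>)))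
   \<comment> \<open>(M4)\<close>
   \<and> (\<forall>A \<subseteq> linf_plus. (\<exists>C. \<forall>s\<in>A. nrm s \<le> C) \<longrightarrow>
        (\<forall>\<epsilon>>0. \<exists>\<delta>>0. \<forall>s0\<in>A. \<forall>s\<in>linf_plus. nrm (\<lambda>k. s k - s0 k) \<le> \<delta> \<longrightarrow>
           (\<forall>i. \<bar>real_of_ereal (mu i (restr (Ii i) s)) - real_of_ereal (mu i (restr (Ii i) s0))\<bar> \<le> \<epsilon>)))"

definition Gam ::
  "('i \<Rightarrow> 'i set) \<Rightarrow> ('i \<Rightarrow> 'i \<Rightarrow> real \<Rightarrow> real) \<Rightarrow> ('i \<Rightarrow> ('i \<Rightarrow> real) \<Rightarrow> ereal)
   \<Rightarrow> ('i \<Rightarrow> real) \<Rightarrow> ('i \<Rightarrow> real)" where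
  "Gam Ii gam mu s = (\<lambda>i. real_of_ereal (mu i (\<lambda>j. if j \<in> Ii i then gam i j (s j) else 0)))"

definition Gam_rho where
  "Gam_rho Ii gam mu \<rho> s = (\<lambda>i. Gam Ii gam mu s i + \<rho> (Gam Ii gam mu s i))"

definition Gam_hat where
  "Gam_hat Ii gam mu s = (\<lambda>i. max (s i) (Gam Ii gam mu s i))"

definition UGAS :: "(('i \<Rightarrow> real) \<Rightarrow> ('i \<Rightarrow> real)) \<Rightarrow> bool" where
  "UGAS T \<longleftrightarrow> (\<exists>\<beta>. class_KL \<beta> \<and>
     (\<forall>s\<in>linf_plus. \<forall>n::nat. nrm ((T ^^ n) s) \<le> \<beta> (nrm s) (real n)))"

definition oplus_MBI where
  "oplus_MBI Ii gam mu \<longleftrightarrow> (\<exists>\<phi>. class_Kinf \<phi> \<and>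
     (\<forall>s\<in>linf_plus. \<forall>b\<in>linf_plus.
        (\<forall>i. s i \<le> max (b i) (Gam Ii gam mu s i)) \<longrightarrow> nrm s \<le> \<phi> (nrm b)))"

definition sigma_star where
  "sigma_star Ii gam mu r = (\<lambda>i. SUP n::nat. ((Gam_hat Ii gam mu ^^ n) (\<lambda>_. r)) i)"

end

theory Submission
  imports Defs
begin

lemma linf_plusI: "(\<And>i. 0 \<le> s i) \<Longrightarrow> (\<And>i. s i \<le> C) \<Longrightarrow> s \<in> linf_plus"
  unfolding linf_plus_def bounded_iff by (auto intro!: exI[of _ C])

lemma linf_plusD: "s \<in> linf_plus \<Longrightarrow> 0 \<le> s i"
  unfolding linf_plus_def by auto

lemma linf_plus_bnd: "s \<in> linf_plus \<Longrightarrow> \<exists>C\<ge>0. \<forall>i. s i \<le> C"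
proof -
  assume "s \<in> linf_plus"
  then obtain a where a: "\<forall>x\<in>range s. norm x \<le> a" unfolding linf_plus_def bounded_iff by blast
  have "\<forall>i. s i \<le> max a 0"
  proof
    fix i have "norm (s i) \<le> a" using a by blast
    then show "s i \<le> max a 0" by simp
  qed
  then show ?thesis by (intro exI[of _ "max a 0"]) simp
qed

lemma nrm_ge_bnd: "(\<And>i. \<bar>s i\<bar> \<le> C) \<Longrightarrow> \<bar>s i\<bar> \<le> nrm s"
  unfolding nrm_def by (rule cSUP_upper) (auto intro!: bdd_aboveI2)

lemma nrm_le: "(\<And>i. \<bar>s i\<bar> \<le> C) \<Longrightarrow> nrm s \<le> C"
  unfolding nrm_def by (rule cSUP_least) auto

lemma nrm_const: "nrm (\<lambda>_. c) = \<bar>c\<bar>"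
  unfolding nrm_def by simp

lemma nrm_ge: "s \<in> linf_plus \<Longrightarrow> s i \<le> nrm s"
proof -
  assume s: "s \<in> linf_plus"
  then obtain C where "\<forall>i. s i \<le> C" using linf_plus_bnd by blast
  with s have "\<And>i. \<bar>s i\<bar> \<le> C" using linf_plusD by (metis abs_of_nonneg)
  then have "\<bar>s i\<bar> \<le> nrm s" using nrm_ge_bnd[of s C i] by simp
  then show ?thesis by linarith
qed

lemma nrm_diff_ge: "s \<in> linf_plus \<Longrightarrow> t \<in> linf_plus \<Longrightarrow> \<bar>s i - t i\<bar> \<le> nrm (\<lambda>i. s i - t i)"
proof -
  assume s: "s \<in> linf_plus" and t: "t \<in> linf_plus"
  obtain C where C: "\<forall>i. s i \<le> C" using linf_plus_bnd s by blast
  obtain D where D: "\<forall>i. t i \<le> D" using linf_plus_bnd t by blast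
  have "\<And>i. \<bar>s i - t i\<bar> \<le> C + D" using C D linf_plusD[OF s] linf_plusD[OF t]
    by (smt (verit))
  from nrm_ge_bnd[of "\<lambda>i. s i - t i" "C+D" i, OF this] show ?thesis .
qed

lemma classK_mono: "class_K f \<Longrightarrow> 0 \<le> a \<Longrightarrow> a \<le> b \<Longrightarrow> f a \<le> f b"
  unfolding class_K_def by (auto intro: strict_mono_on_leD)

lemma classK_smono: "class_K f \<Longrightarrow> 0 \<le> a \<Longrightarrow> a < b \<Longrightarrow> f a < f b"
  unfolding class_K_def by (auto simp: strict_mono_on_def)

lemma classK_nonneg: "class_K f \<Longrightarrow> 0 \<le> a \<Longrightarrow> 0 \<le> f a"
  using classK_mono[of f 0 a] unfolding class_K_def by auto

lemma classK_pos: "class_K f \<Longrightarrow> 0 < a \<Longrightarrow> 0 < f a"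
  using classK_smono[of f 0 a] unfolding class_K_def by auto

lemma classK_inv: "class_K f \<Longrightarrow> 0 \<le> a \<Longrightarrow> inv_into {0..} f (f a) = a"
  unfolding class_K_def by (auto intro!: inv_into_f_f strict_mono_on_imp_inj_on)


context
  fixes Ii :: "'i::countable \<Rightarrow> 'i set" and gam :: "'i \<Rightarrow> 'i \<Rightarrow> real \<Rightarrow> real"
    and mu :: "'i \<Rightarrow> ('i \<Rightarrow> real) \<Rightarrow> ereal"
  assumes gain: "gain_operator Ii gam mu"
begin

lemma g_fin: "finite (Ii i)"
  using gain[unfolded gain_operator_def, THEN conjunct1] by blast

lemma g_Kinf: "j \<in> Ii i \<Longrightarrow> class_Kinf (gam i j)"
  using gain[unfolded gain_operator_def, THEN conjunct2, THEN conjunct1] by blast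

lemma g_K: "j \<in> Ii i \<Longrightarrow> class_K (gam i j)"
  using g_Kinf unfolding class_Kinf_def by blast

lemma g_eq: "ptw_equicont {gam i j | i j. j \<in> Ii i}"
  using gain[unfolded gain_operator_def, THEN conjunct2, THEN conjunct2, THEN conjunct1] .

lemma g_nonneg: "s \<in> linf_plus \<Longrightarrow> 0 \<le> mu i s"
  using gain[unfolded gain_operator_def, THEN conjunct2, THEN conjunct2, THEN conjunct2, THEN conjunct1] by blast

lemma g_M1: "mu i (\<lambda>_. 0) = 0"
  using gain[unfolded gain_operator_def, THEN conjunct2, THEN conjunct2, THEN conjunct2, THEN conjunct2, THEN conjunct1] by blast

lemma g_M2: assumes "s \<in> linf_plus" "t \<in> linf_plus" "\<And>k. s k \<le> t k" shows "mu i s \<le> mu i t"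
proof -
  have M: "\<forall>i. \<forall>s\<in>linf_plus. \<forall>t\<in>linf_plus. (\<forall>k. s k \<le> t k) \<longrightarrow> mu i s \<le> mu i t"
    using gain[unfolded gain_operator_def, THEN conjunct2, THEN conjunct2, THEN conjunct2, THEN conjunct2, THEN conjunct2, THEN conjunct1] .
  show ?thesis by (rule M[rule_format]) (use assms in auto)
qed

lemma g_M3: "let V = {s\<in>linf_plus. \<forall>k. k \<notin> Ii i \<longrightarrow> s k = 0} in
          (\<forall>s\<in>V. \<bar>mu i s\<bar> \<noteq> \<infinity>) \<and>
          (\<forall>s\<in>V. \<forall>\<epsilon>>0. \<exists>\<delta>>0. \<forall>t\<in>V. nrm (\<lambda>k. t k - s k) \<le> \<delta> \<longrightarrow>
               \<bar>real_of_ereal (mu i t) - real_of_ereal (mu i s)\<bar> \<le> \<epsilon>)"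
proof -
  have M: "\<forall>i. \<forall>J. finite J \<longrightarrow>
        (let V = {s\<in>linf_plus. \<forall>k. k \<notin> J \<longrightarrow> s k = 0} in
          (\<forall>s\<in>V. \<bar>mu i s\<bar> \<noteq> \<infinity>) \<and>
          (\<forall>s\<in>V. \<forall>\<epsilon>>0. \<exists>\<delta>>0. \<forall>t\<in>V. nrm (\<lambda>k. t k - s k) \<le> \<delta> \<longrightarrow>
               \<bar>real_of_ereal (mu i t) - real_of_ereal (mu i s)\<bar> \<le> \<epsilon>))"
    using gain[unfolded gain_operator_def, THEN conjunct2, THEN conjunct2, THEN conjunct2, THEN conjunct2, THEN conjunct2, THEN conjunct2, THEN conjunct1] .
  show ?thesis using M[rule_format, OF g_fin[of i], of i] .
qed

lemma g_M3a: assumes t: "t \<in> linf_plus" and v: "\<And>k. k \<notin> Ii i \<Longrightarrow> t k = 0" shows "\<bar>mu i t\<bar> \<noteq> \<infinity>"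
proof -
  have "t \<in> {s\<in>linf_plus. \<forall>k. k \<notin> Ii i \<longrightarrow> s k = 0}" using t v by simp
  then show ?thesis using g_M3[of i, unfolded Let_def, THEN conjunct1] by (rule bspec[rotated])
qed

lemma g_M3b: assumes s: "s \<in> linf_plus" and v: "\<And>k. k \<notin> Ii i \<Longrightarrow> s k = 0" and e: "\<epsilon> > 0"
  shows "\<exists>\<delta>>0. \<forall>t\<in>linf_plus. (\<forall>k. k \<notin> Ii i \<longrightarrow> t k = 0) \<longrightarrow> nrm (\<lambda>k. t k - s k) \<le> \<delta> \<longrightarrow>
               \<bar>real_of_ereal (mu i t) - real_of_ereal (mu i s)\<bar> \<le> \<epsilon>"
proof -
  have sV: "s \<in> {s\<in>linf_plus. \<forall>k. k \<notin> Ii i \<longrightarrow> s k = 0}" using s v by simp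
  from g_M3[of i, unfolded Let_def, THEN conjunct2, rule_format, OF sV e]
  obtain \<delta> where d: "\<delta> > 0" "\<forall>t\<in>{s\<in>linf_plus. \<forall>k. k \<notin> Ii i \<longrightarrow> s k = 0}. nrm (\<lambda>k. t k - s k) \<le> \<delta> \<longrightarrow>
               \<bar>real_of_ereal (mu i t) - real_of_ereal (mu i s)\<bar> \<le> \<epsilon>" by blast
  show ?thesis
    by (rule exI[of _ \<delta>]) (use d in auto)
qed

lemma g_M4: "A \<subseteq> linf_plus \<Longrightarrow> (\<forall>s\<in>A. nrm s \<le> C) \<Longrightarrow> \<epsilon> > 0 \<Longrightarrow>
   \<exists>\<delta>>0. \<forall>s0\<in>A. \<forall>s\<in>linf_plus. nrm (\<lambda>k. s k - s0 k) \<le> \<delta> \<longrightarrow>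
           (\<forall>i. \<bar>real_of_ereal (mu i (restr (Ii i) s)) - real_of_ereal (mu i (restr (Ii i) s0))\<bar> \<le> \<epsilon>)"
proof -
  assume "A \<subseteq> linf_plus" "\<forall>s\<in>A. nrm s \<le> C" "\<epsilon> > 0"
  moreover note M4 = gain[unfolded gain_operator_def, THEN conjunct2, THEN conjunct2, THEN conjunct2, THEN conjunct2, THEN conjunct2, THEN conjunct2, THEN conjunct2]
  ultimately show ?thesis by blast
qed

definition uv :: "'i \<Rightarrow> ('i \<Rightarrow> real) \<Rightarrow> 'i \<Rightarrow> real" where
  "uv i s = (\<lambda>j. if j \<in> Ii i then gam i j (s j) else 0)"

lemma Gam_uv: "Gam Ii gam mu s i = real_of_ereal (mu i (uv i s))"
  unfolding Gam_def uv_def by simp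

lemma uv_vanish: "k \<notin> Ii i \<Longrightarrow> uv i s k = 0"
  unfolding uv_def by simp

lemma uv_nonneg: "(\<And>j. j \<in> Ii i \<Longrightarrow> 0 \<le> s j) \<Longrightarrow> 0 \<le> uv i s k"
  unfolding uv_def using g_K classK_nonneg by auto

lemma uv_lp: "(\<And>j. j \<in> Ii i \<Longrightarrow> 0 \<le> s j) \<Longrightarrow> uv i s \<in> linf_plus"
proof -
  assume nn: "\<And>j. j \<in> Ii i \<Longrightarrow> 0 \<le> s j"
  have nnk: "\<And>k. 0 \<le> uv i s k" by (rule uv_nonneg) (rule nn)
  have "uv i s k \<le> (\<Sum>j\<in>Ii i. uv i s j)" for k
  proof (cases "k \<in> Ii i")
    case True
    then show ?thesis using member_le_sum[of k "Ii i" "uv i s"] g_fin nnk by blast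
  next
    case False
    then show ?thesis using uv_vanish[OF False] nnk by (simp add: sum_nonneg)
  qed
  then show ?thesis using nnk by (intro linf_plusI) auto
qed

lemma restr_uv: "restr (Ii i) (uv i s) = uv i s"
  unfolding restr_def uv_def by auto

lemma mu_uv: "(\<And>j. j \<in> Ii i \<Longrightarrow> 0 \<le> s j) \<Longrightarrow> mu i (uv i s) = ereal (Gam Ii gam mu s i) \<and> 0 \<le> Gam Ii gam mu s i"
proof -
  assume nn: "\<And>j. j \<in> Ii i \<Longrightarrow> 0 \<le> s j"
  have lp: "uv i s \<in> linf_plus" by (rule uv_lp) (rule nn)
  have f: "\<bar>mu i (uv i s)\<bar> \<noteq> \<infinity>" by (rule g_M3a[OF lp]) (rule uv_vanish)
  have p: "0 \<le> mu i (uv i s)" using g_nonneg[OF lp] .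
  show ?thesis unfolding Gam_uv using f p
    by (cases "mu i (uv i s)") auto
qed

lemma Gam_nonneg: "(\<And>j. j \<in> Ii i \<Longrightarrow> 0 \<le> s j) \<Longrightarrow> 0 \<le> Gam Ii gam mu s i"
  using mu_uv by blast

lemma Gam_mono: "(\<And>j. j \<in> Ii i \<Longrightarrow> 0 \<le> s j) \<Longrightarrow> (\<And>j. j \<in> Ii i \<Longrightarrow> s j \<le> t j) \<Longrightarrow>
   Gam Ii gam mu s i \<le> Gam Ii gam mu t i"
proof -
  assume nn: "\<And>j. j \<in> Ii i \<Longrightarrow> 0 \<le> s j" and le: "\<And>j. j \<in> Ii i \<Longrightarrow> s j \<le> t j"
  have nt: "\<And>j. j \<in> Ii i \<Longrightarrow> 0 \<le> t j" using nn le by force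
  have "uv i s k \<le> uv i t k" for k
  proof (cases "k \<in> Ii i")
    case True
    then show ?thesis unfolding uv_def using classK_mono[OF g_K[OF True] nn[OF True] le[OF True]] by simp
  qed (simp add: uv_def)
  moreover have "uv i s \<in> linf_plus" by (rule uv_lp) (rule nn)
  moreover have "uv i t \<in> linf_plus" by (rule uv_lp) (rule nt)
  ultimately have "mu i (uv i s) \<le> mu i (uv i t)" using g_M2[of "uv i s" "uv i t" i] by blast
  moreover have "mu i (uv i s) = ereal (Gam Ii gam mu s i)" using mu_uv[of i s, OF nn] by (rule conjunct1)
  moreover have "mu i (uv i t) = ereal (Gam Ii gam mu t i)" using mu_uv[of i t, OF nt] by (rule conjunct1)
  ultimately show ?thesis by simp
qed

lemma Gam_local: "(\<And>j. j \<in> Ii i \<Longrightarrow> s j = t j) \<Longrightarrow> Gam Ii gam mu s i = Gam Ii gam mu t i"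
proof -
  assume "\<And>j. j \<in> Ii i \<Longrightarrow> s j = t j"
  then have "uv i s = uv i t" unfolding uv_def by auto
  then show ?thesis unfolding Gam_uv by simp
qed

lemma Gam_zero: "Gam Ii gam mu (\<lambda>_. 0) i = 0"
proof -
  have "uv i (\<lambda>_. 0) = (\<lambda>_. 0)" unfolding uv_def using g_K class_K_def by auto
  then show ?thesis unfolding Gam_uv by (simp add: g_M1)
qed


lemma real_mono_fin: "\<bar>a\<bar> \<noteq> \<infinity> \<Longrightarrow> \<bar>b\<bar> \<noteq> \<infinity> \<Longrightarrow> a \<le> b \<Longrightarrow> real_of_ereal a \<le> real_of_ereal b"
  by (cases a; cases b) auto

lemma restr_zero: "restr J (\<lambda>_. 0) = (\<lambda>_. 0)"
  unfolding restr_def by auto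

lemma gam_bound: assumes C: "0 \<le> C"
  shows "\<exists>K\<ge>0. \<forall>i. \<forall>j\<in>Ii i. \<forall>a. 0 \<le> a \<and> a \<le> C \<longrightarrow> gam i j a \<le> K"
proof -
  define F where "F = {gam i j | i j. j \<in> Ii i}"
  have eq: "\<forall>r0\<ge>0. \<forall>\<epsilon>>0. \<exists>\<delta>>0. \<forall>f\<in>F. \<forall>r\<ge>0. \<bar>r - r0\<bar> \<le> \<delta> \<longrightarrow> \<bar>f r - f r0\<bar> \<le> \<epsilon>"
    using g_eq unfolding ptw_equicont_def F_def .
  have "\<forall>r0. \<exists>\<delta>. 0 \<le> r0 \<longrightarrow> \<delta> > 0 \<and> (\<forall>f\<in>F. \<forall>r\<ge>0. \<bar>r - r0\<bar> \<le> \<delta> \<longrightarrow> \<bar>f r - f r0\<bar> \<le> 1)"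
  proof
    fix r0 show "\<exists>\<delta>. 0 \<le> r0 \<longrightarrow> \<delta> > 0 \<and> (\<forall>f\<in>F. \<forall>r\<ge>0. \<bar>r - r0\<bar> \<le> \<delta> \<longrightarrow> \<bar>f r - f r0\<bar> \<le> 1)"
    proof (cases "0 \<le> r0")
      case True
      then obtain \<delta> where "\<delta> > 0" "\<forall>f\<in>F. \<forall>r\<ge>0. \<bar>r - r0\<bar> \<le> \<delta> \<longrightarrow> \<bar>f r - f r0\<bar> \<le> 1"
        using eq[rule_format, of r0 1] by auto
      then show ?thesis by auto
    qed auto
  qed
  then obtain D where D: "\<And>r0. 0 \<le> r0 \<Longrightarrow> D r0 > 0 \<and> (\<forall>f\<in>F. \<forall>r\<ge>0. \<bar>r - r0\<bar> \<le> D r0 \<longrightarrow> \<bar>f r - f r0\<bar> \<le> 1)"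
    by metis
  have cov: "{0..C} \<subseteq> \<Union>((\<lambda>r0. ball r0 (D r0)) ` {0..C})"
  proof
    fix x assume "x \<in> {0..C}"
    then have "x \<in> ball x (D x)" using D[of x] by auto
    then show "x \<in> \<Union>((\<lambda>r0. ball r0 (D r0)) ` {0..C})" using \<open>x \<in> {0..C}\<close> by blast
  qed
  obtain e where e: "0 < e" "\<And>x. x \<in> {0..C} \<Longrightarrow> \<exists>G \<in> (\<lambda>r0. ball r0 (D r0)) ` {0..C}. ball x e \<subseteq> G"
    using Heine_Borel_lemma[OF compact_Icc cov] by auto
  have step: "\<bar>f x' - f x\<bar> \<le> 2" if f: "f \<in> F" and x: "0 \<le> x" "x \<le> C" and x': "0 \<le> x'" "\<bar>x' - x\<bar> < e" for f x x'
  proof -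
    obtain y0 where y0: "y0 \<in> {0..C}" "ball x e \<subseteq> ball y0 (D y0)" using e(2)[of x] x by auto
    have "x \<in> ball x e" using e(1) by simp
    then have "x \<in> ball y0 (D y0)" using y0(2) by blast
    then have d1: "\<bar>x - y0\<bar> \<le> D y0" by (auto simp: dist_real_def)
    have "x' \<in> ball x e" using x' by (simp add: dist_real_def abs_minus_commute)
    then have "x' \<in> ball y0 (D y0)" using y0(2) by blast
    then have d2: "\<bar>x' - y0\<bar> \<le> D y0" by (auto simp: dist_real_def)
    have "\<bar>f x - f y0\<bar> \<le> 1" using D[of y0] y0 d1 f x by auto
    moreover have "\<bar>f x' - f y0\<bar> \<le> 1" using D[of y0] y0 d2 f x' by auto
    ultimately show ?thesis by linarith
  qed
  have f0: "f 0 = 0" if "f \<in> F" for f using that g_K unfolding F_def class_K_def by auto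
  have ind: "\<forall>f\<in>F. f (min C (real n * (e/2))) \<le> 2 * real n" for n
  proof (induction n)
    case 0
    show ?case
    proof
      fix f assume "f \<in> F"
      then show "f (min C (real 0 * (e / 2))) \<le> 2 * real 0" using f0[of f] C by simp
    qed
  next
    case (Suc n)
    show ?case
    proof
      fix f assume f: "f \<in> F"
      have "\<bar>min C (real (Suc n) * (e/2)) - min C (real n * (e/2))\<bar> < e"
        using e(1) by (auto simp: min_def algebra_simps)
      moreover have "0 \<le> min C (real n * (e/2))" "min C (real n * (e/2)) \<le> C" "0 \<le> min C (real (Suc n) * (e/2))"
        using C e(1) by auto
      ultimately have "\<bar>f (min C (real (Suc n) * (e/2))) - f (min C (real n * (e/2)))\<bar> \<le> 2"
        using step[OF f] by blast
      then show "f (min C (real (Suc n) * (e/2))) \<le> 2 * real (Suc n)" using Suc.IH f by auto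
    qed
  qed
  define n where "n = nat \<lceil>2 * C / e\<rceil>"
  have "C \<le> real n * (e/2)"
  proof -
    have "2 * C / e \<le> real n" unfolding n_def by linarith
    then show ?thesis using e(1) by (simp add: field_simps)
  qed
  then have mC: "min C (real n * (e/2)) = C" by simp
  show ?thesis
  proof (intro exI[of _ "2 * real n"] conjI allI ballI impI)
    fix i j a assume j: "j \<in> Ii i" and a: "0 \<le> a \<and> a \<le> C"
    have "gam i j \<in> F" unfolding F_def using j by blast
    then have "gam i j C \<le> 2 * real n" using ind[of n] mC by auto
    moreover have "gam i j a \<le> gam i j C" using classK_mono[OF g_K[OF j]] a by auto
    ultimately show "gam i j a \<le> 2 * real n" by linarith
  qed simp
qed


lemma mu_const_bound: assumes K: "0 \<le> K"
  shows "\<exists>B. \<forall>i. real_of_ereal (mu i (restr (Ii i) (\<lambda>_. K))) \<le> B"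
proof -
  define A :: "('i \<Rightarrow> real) set" where "A = {(\<lambda>_. x) | x::real. 0 \<le> x \<and> x \<le> K}"
  have Alp: "A \<subseteq> linf_plus" unfolding A_def by (auto intro!: linf_plusI)
  have Anrm: "\<forall>s\<in>A. nrm s \<le> K" unfolding A_def by (auto simp: nrm_const)
  obtain \<delta> where d: "\<delta> > 0" "\<forall>s0\<in>A. \<forall>s\<in>linf_plus. nrm (\<lambda>k. s k - s0 k) \<le> \<delta> \<longrightarrow>
           (\<forall>i. \<bar>real_of_ereal (mu i (restr (Ii i) s)) - real_of_ereal (mu i (restr (Ii i) s0))\<bar> \<le> 1)"
    using g_M4[OF Alp Anrm, of 1] by auto
  have ind: "\<forall>i. real_of_ereal (mu i (restr (Ii i) (\<lambda>_. min K (real n * \<delta>)))) \<le> real n" for n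
  proof (induction n)
    case 0
    show ?case using K by (simp add: restr_zero g_M1)
  next
    case (Suc n)
    have s0A: "(\<lambda>_. min K (real n * \<delta>)) \<in> A" unfolding A_def using K d(1) by auto
    have slp: "(\<lambda>_::'i. min K (real (Suc n) * \<delta>)) \<in> linf_plus" using K d(1) by (intro linf_plusI) auto
    have "\<bar>min K (real (Suc n) * \<delta>) - min K (real n * \<delta>)\<bar> \<le> \<delta>"
      using d(1) by (auto simp: min_def algebra_simps)
    then have nd: "nrm (\<lambda>k. (\<lambda>_::'i. min K (real (Suc n) * \<delta>)) k - (\<lambda>_::'i. min K (real n * \<delta>)) k) \<le> \<delta>"
      by (simp add: nrm_const)
    then have ab: "\<forall>i. \<bar>real_of_ereal (mu i (restr (Ii i) (\<lambda>_. min K (real (Suc n) * \<delta>)))) -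
        real_of_ereal (mu i (restr (Ii i) (\<lambda>_. min K (real n * \<delta>))))\<bar> \<le> 1"
      by (intro allI) (rule d(2)[rule_format, OF s0A slp nd])
    show ?case
    proof
      fix i
      have "\<bar>real_of_ereal (mu i (restr (Ii i) (\<lambda>_. min K (real (Suc n) * \<delta>)))) -
        real_of_ereal (mu i (restr (Ii i) (\<lambda>_. min K (real n * \<delta>))))\<bar> \<le> 1" using ab by blast
      moreover have "real_of_ereal (mu i (restr (Ii i) (\<lambda>_. min K (real n * \<delta>)))) \<le> real n"
        using Suc.IH by blast
      ultimately show "real_of_ereal (mu i (restr (Ii i) (\<lambda>_. min K (real (Suc n) * \<delta>)))) \<le> real (Suc n)"
        by simp
    qed
  qed
  define n where "n = nat \<lceil>K / \<delta>\<rceil>"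
  have "K \<le> real n * \<delta>"
  proof -
    have "K / \<delta> \<le> real n" unfolding n_def by linarith
    then show ?thesis using d(1) by (simp add: field_simps)
  qed
  then have "min K (real n * \<delta>) = K" by simp
  then show ?thesis using ind[of n] by auto
qed

lemma Gam_lp: assumes s: "s \<in> linf_plus" shows "Gam Ii gam mu s \<in> linf_plus"
proof -
  obtain C where C: "0 \<le> C" "\<forall>i. s i \<le> C" using linf_plus_bnd[OF s] by blast
  obtain K where K: "0 \<le> K" "\<forall>i. \<forall>j\<in>Ii i. \<forall>a. 0 \<le> a \<and> a \<le> C \<longrightarrow> gam i j a \<le> K"
    using gam_bound[OF C(1)] by blast
  obtain B where B: "\<forall>i. real_of_ereal (mu i (restr (Ii i) (\<lambda>_. K))) \<le> B"
    using mu_const_bound[OF K(1)] by blast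
  have nn: "0 \<le> s j" for j using linf_plusD[OF s] .
  have "Gam Ii gam mu s i \<le> B" for i
  proof -
    have rlp: "restr (Ii i) (\<lambda>_. K) \<in> linf_plus" unfolding restr_def using K(1) by (intro linf_plusI) auto
    have rv: "\<And>k. k \<notin> Ii i \<Longrightarrow> restr (Ii i) (\<lambda>_. K) k = 0" unfolding restr_def by simp
    have ulp: "uv i s \<in> linf_plus" by (rule uv_lp) (rule nn)
    have le: "uv i s k \<le> restr (Ii i) (\<lambda>_. K) k" for k
      unfolding uv_def restr_def using K(2) nn C(2) by auto
    have f1: "\<bar>mu i (uv i s)\<bar> \<noteq> \<infinity>" by (rule g_M3a[OF ulp]) (rule uv_vanish)
    have f2: "\<bar>mu i (restr (Ii i) (\<lambda>_. K))\<bar> \<noteq> \<infinity>" by (rule g_M3a[OF rlp]) (rule rv)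
    have "mu i (uv i s) \<le> mu i (restr (Ii i) (\<lambda>_. K))" using g_M2[OF ulp rlp le] .
    then have "real_of_ereal (mu i (uv i s)) \<le> real_of_ereal (mu i (restr (Ii i) (\<lambda>_. K)))"
      by (rule real_mono_fin[OF f1 f2])
    then show ?thesis unfolding Gam_uv using B by (smt (verit))
  qed
  moreover have "0 \<le> Gam Ii gam mu s i" for i by (rule Gam_nonneg) (rule nn)
  ultimately show ?thesis by (intro linf_plusI)
qed

lemma Gam_cont: assumes sl: "\<And>n. s n \<in> linf_plus" and sg: "\<sigma> \<in> linf_plus"
  and lim: "\<And>j. (\<lambda>n. s n j) \<longlonglongrightarrow> \<sigma> j" and e: "\<epsilon> > 0"
  shows "\<exists>N. \<forall>n\<ge>N. \<bar>Gam Ii gam mu (s n) i - Gam Ii gam mu \<sigma> i\<bar> \<le> \<epsilon>"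
proof -
  have nn: "0 \<le> \<sigma> j" for j using linf_plusD[OF sg] .
  have ulp: "uv i \<sigma> \<in> linf_plus" by (rule uv_lp) (rule nn)
  obtain \<delta> where d: "\<delta> > 0" "\<forall>t\<in>linf_plus. (\<forall>k. k \<notin> Ii i \<longrightarrow> t k = 0) \<longrightarrow> nrm (\<lambda>k. t k - uv i \<sigma> k) \<le> \<delta> \<longrightarrow>
               \<bar>real_of_ereal (mu i t) - real_of_ereal (mu i (uv i \<sigma>))\<bar> \<le> \<epsilon>"
    using g_M3b[OF ulp uv_vanish e] by blast
  have "\<forall>j\<in>Ii i. eventually (\<lambda>n. dist (gam i j (s n j)) (gam i j (\<sigma> j)) < \<delta>) sequentially"
  proof
    fix j assume j: "j \<in> Ii i"
    have "continuous_on {0..} (gam i j)" using g_K[OF j] unfolding class_K_def by blast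
    then have "(\<lambda>n. gam i j (s n j)) \<longlonglongrightarrow> gam i j (\<sigma> j)"
      by (rule continuous_on_tendsto_compose[OF _ lim]) (auto simp: nn linf_plusD[OF sl])
    then show "eventually (\<lambda>n. dist (gam i j (s n j)) (gam i j (\<sigma> j)) < \<delta>) sequentially"
      using tendstoD d(1) by blast
  qed
  then have "eventually (\<lambda>n. \<forall>j\<in>Ii i. dist (gam i j (s n j)) (gam i j (\<sigma> j)) < \<delta>) sequentially"
    by (rule eventually_ball_finite[OF g_fin])
  then obtain N where N: "\<And>n j. n \<ge> N \<Longrightarrow> j \<in> Ii i \<Longrightarrow> dist (gam i j (s n j)) (gam i j (\<sigma> j)) < \<delta>"
    unfolding eventually_sequentially by blast
  show ?thesis
  proof (intro exI[of _ N] allI impI)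
    fix n assume n: "N \<le> n"
    have nsn: "0 \<le> s n j" for j using linf_plusD[OF sl] .
    have ulpn: "uv i (s n) \<in> linf_plus" by (rule uv_lp) (rule nsn)
    have "\<bar>uv i (s n) k - uv i \<sigma> k\<bar> \<le> \<delta>" for k
      using N[OF n, of k] d(1) unfolding uv_def by (auto simp: dist_real_def)
    then have "nrm (\<lambda>k. uv i (s n) k - uv i \<sigma> k) \<le> \<delta>" by (rule nrm_le)
    then have "\<bar>real_of_ereal (mu i (uv i (s n))) - real_of_ereal (mu i (uv i \<sigma>))\<bar> \<le> \<epsilon>"
      using d(2) ulpn uv_vanish by blast
    then show "\<bar>Gam Ii gam mu (s n) i - Gam Ii gam mu \<sigma> i\<bar> \<le> \<epsilon>" unfolding Gam_uv .
  qed
qed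


lemma gap: assumes inv_eq: "ptw_equicont {inv_into {0..} (gam i j) | i j. j \<in> Ii i}"
  and M: "0 \<le> M" and eta: "\<eta> > 0"
  shows "\<exists>m>0. \<forall>i. \<forall>j\<in>Ii i. \<forall>a. 0 \<le> a \<and> a \<le> M \<longrightarrow> m \<le> gam i j (a+\<eta>) - gam i j a"
proof -
  obtain K where K: "0 \<le> K" "\<forall>i. \<forall>j\<in>Ii i. \<forall>a. 0 \<le> a \<and> a \<le> M + \<eta> \<longrightarrow> gam i j a \<le> K"
    using gam_bound[of "M + \<eta>"] M eta by auto
  define F where "F = {inv_into {0..} (gam i j) | i j. j \<in> Ii i}"
  have eq: "\<forall>r0\<ge>0. \<forall>\<epsilon>>0. \<exists>\<delta>>0. \<forall>f\<in>F. \<forall>r\<ge>0. \<bar>r - r0\<bar> \<le> \<delta> \<longrightarrow> \<bar>f r - f r0\<bar> \<le> \<epsilon>"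
    using inv_eq unfolding ptw_equicont_def F_def .
  have e3: "\<eta>/3 > 0" using eta by simp
  have "\<forall>r0. \<exists>\<delta>. 0 \<le> r0 \<longrightarrow> \<delta> > 0 \<and> (\<forall>f\<in>F. \<forall>r\<ge>0. \<bar>r - r0\<bar> \<le> \<delta> \<longrightarrow> \<bar>f r - f r0\<bar> \<le> \<eta>/3)"
  proof
    fix r0 show "\<exists>\<delta>. 0 \<le> r0 \<longrightarrow> \<delta> > 0 \<and> (\<forall>f\<in>F. \<forall>r\<ge>0. \<bar>r - r0\<bar> \<le> \<delta> \<longrightarrow> \<bar>f r - f r0\<bar> \<le> \<eta>/3)"
    proof (cases "0 \<le> r0")
      case True
      then obtain \<delta> where "\<delta> > 0" "\<forall>f\<in>F. \<forall>r\<ge>0. \<bar>r - r0\<bar> \<le> \<delta> \<longrightarrow> \<bar>f r - f r0\<bar> \<le> \<eta>/3"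
        using eq[rule_format, OF True e3] by auto
      then show ?thesis by auto
    qed auto
  qed
  then obtain D where D: "\<And>r0. 0 \<le> r0 \<Longrightarrow> D r0 > 0 \<and> (\<forall>f\<in>F. \<forall>r\<ge>0. \<bar>r - r0\<bar> \<le> D r0 \<longrightarrow> \<bar>f r - f r0\<bar> \<le> \<eta>/3)"
    by metis
  have cov: "{0..K} \<subseteq> \<Union>((\<lambda>r0. ball r0 (D r0)) ` {0..K})"
  proof
    fix x assume "x \<in> {0..K}"
    then have "x \<in> ball x (D x)" using D[of x] by auto
    then show "x \<in> \<Union>((\<lambda>r0. ball r0 (D r0)) ` {0..K})" using \<open>x \<in> {0..K}\<close> by blast
  qed
  obtain e where e: "0 < e" "\<And>x. x \<in> {0..K} \<Longrightarrow> \<exists>G \<in> (\<lambda>r0. ball r0 (D r0)) ` {0..K}. ball x e \<subseteq> G"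
    using Heine_Borel_lemma[OF compact_Icc cov] by auto
  show ?thesis
  proof (intro exI[of _ e] conjI allI ballI impI)
    show "0 < e" by fact
    fix i j a assume j: "j \<in> Ii i" and a: "0 \<le> a \<and> a \<le> M"
    show "e \<le> gam i j (a + \<eta>) - gam i j a"
    proof (rule ccontr)
      assume neg: "\<not> e \<le> gam i j (a + \<eta>) - gam i j a"
      have gK: "class_K (gam i j)" by (rule g_K[OF j])
      define y where "y = gam i j a"
      define y' where "y' = gam i j (a + \<eta>)"
      have y0: "0 \<le> y" unfolding y_def using classK_nonneg[OF gK] a by auto
      have yK: "y \<le> K" unfolding y_def using K(2) j a eta by auto
      have yy': "y \<le> y'" unfolding y_def y'_def using classK_mono[OF gK] a eta by auto
      have "y' \<in> ball y e" using neg yy' unfolding y_def y'_def by (auto simp: dist_real_def)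
      obtain z where z: "z \<in> {0..K}" "ball y e \<subseteq> ball z (D z)" using e(2)[of y] y0 yK by auto
      have "y \<in> ball y e" using e(1) by simp
      then have "y \<in> ball z (D z)" using z(2) by blast
      then have d1: "\<bar>y - z\<bar> \<le> D z" by (auto simp: dist_real_def)
      have "y' \<in> ball z (D z)" using z(2) \<open>y' \<in> ball y e\<close> by blast
      then have d2: "\<bar>y' - z\<bar> \<le> D z" by (auto simp: dist_real_def)
      have fF: "inv_into {0..} (gam i j) \<in> F" unfolding F_def using j by blast
      have z0: "0 \<le> z" using z by auto
      have h1: "\<bar>inv_into {0..} (gam i j) y - inv_into {0..} (gam i j) z\<bar> \<le> \<eta>/3"
        using D[OF z0] fF y0 d1 by blast
      have h2: "\<bar>inv_into {0..} (gam i j) y' - inv_into {0..} (gam i j) z\<bar> \<le> \<eta>/3"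
        using D[OF z0] fF y0 yy' d2 by auto
      have i1: "inv_into {0..} (gam i j) y = a" unfolding y_def using classK_inv[OF gK] a by auto
      have i2: "inv_into {0..} (gam i j) y' = a + \<eta>" unfolding y'_def using classK_inv[OF gK] a eta by auto
      show False using h1 h2 i1 i2 eta by linarith
    qed
  qed
qed


lemma Gh_lp: assumes s: "s \<in> linf_plus" shows "Gam_hat Ii gam mu s \<in> linf_plus"
proof -
  obtain C where C: "0 \<le> C" "\<forall>i. s i \<le> C" using linf_plus_bnd[OF s] by blast
  obtain D where D: "0 \<le> D" "\<forall>i. Gam Ii gam mu s i \<le> D" using linf_plus_bnd[OF Gam_lp[OF s]] by blast
  have a1: "0 \<le> s i" for i using linf_plusD[OF s] .
  have a2: "0 \<le> Gam Ii gam mu s i" for i using linf_plusD[OF Gam_lp[OF s]] .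
  have a3: "s i \<le> C" "Gam Ii gam mu s i \<le> D" for i using C D by auto
  show ?thesis unfolding Gam_hat_def
  proof (rule linf_plusI[of _ "C + D"])
    fix i show "0 \<le> max (s i) (Gam Ii gam mu s i)" using a1[of i] by linarith
    show "max (s i) (Gam Ii gam mu s i) \<le> C + D" using a1[of i] a2[of i] a3[of i] C D by linarith
  qed
qed

lemma it_lp: "0 \<le> r \<Longrightarrow> (Gam_hat Ii gam mu ^^ n) (\<lambda>_. r) \<in> linf_plus"
proof (induction n)
  case 0
  then show ?case by (auto intro!: linf_plusI)
next
  case (Suc n)
  then show ?case using Gh_lp by simp
qed

lemma Gh_ge: "s i \<le> Gam_hat Ii gam mu s i"
  unfolding Gam_hat_def by simp

lemma it_suc: "(Gam_hat Ii gam mu ^^ n) x i \<le> (Gam_hat Ii gam mu ^^ Suc n) x i"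
  using Gh_ge by simp

lemma it_ge: "r \<le> (Gam_hat Ii gam mu ^^ n) (\<lambda>_. r) i"
proof (induction n)
  case (Suc n)
  then show ?case using it_suc[of n "\<lambda>_. r" i] by linarith
qed simp

lemma it_le_max: assumes r: "0 \<le> r"
  shows "(Gam_hat Ii gam mu ^^ n) (\<lambda>_. r) i \<le> max r (Gam Ii gam mu ((Gam_hat Ii gam mu ^^ n) (\<lambda>_. r)) i)"
proof (induction n arbitrary: i)
  case 0
  then show ?case by simp
next
  case (Suc n)
  define x where "x = (Gam_hat Ii gam mu ^^ n) (\<lambda>_. r)"
  have xl: "x \<in> linf_plus" unfolding x_def using it_lp[OF r] .
  have "Gam Ii gam mu x i \<le> Gam Ii gam mu (Gam_hat Ii gam mu x) i"
    by (rule Gam_mono) (use linf_plusD[OF xl] Gh_ge in auto)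
  moreover have "x i \<le> max r (Gam Ii gam mu x i)" using Suc.IH unfolding x_def .
  moreover have "Gam_hat Ii gam mu x i = max (x i) (Gam Ii gam mu x i)" unfolding Gam_hat_def by simp
  ultimately have "Gam_hat Ii gam mu x i \<le> max r (Gam Ii gam mu (Gam_hat Ii gam mu x) i)"
    unfolding max_def by (auto split: if_splits)
  then show ?case unfolding x_def by simp
qed

lemma it_below: assumes r: "0 \<le> r" and s: "s \<in> linf_plus" and rs: "\<And>i. r \<le> s i"
  and gs: "\<And>i. Gam Ii gam mu s i \<le> s i"
  shows "(Gam_hat Ii gam mu ^^ n) (\<lambda>_. r) i \<le> s i"
proof (induction n arbitrary: i)
  case 0
  then show ?case using rs by simp
next
  case (Suc n)
  define x where "x = (Gam_hat Ii gam mu ^^ n) (\<lambda>_. r)"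
  have xl: "x \<in> linf_plus" unfolding x_def using it_lp[OF r] .
  have "Gam Ii gam mu x i \<le> Gam Ii gam mu s i"
    by (rule Gam_mono) (use linf_plusD[OF xl] Suc.IH in \<open>auto simp: x_def\<close>)
  then have "Gam_hat Ii gam mu x i \<le> s i" unfolding Gam_hat_def using Suc.IH[of i] gs[of i] x_def by simp
  then show ?case unfolding x_def by simp
qed

lemma it_bdd: assumes MBI: "oplus_MBI Ii gam mu" and r: "0 \<le> r"
  shows "\<exists>B. \<forall>n i. (Gam_hat Ii gam mu ^^ n) (\<lambda>_. r) i \<le> B"
proof -
  obtain \<phi> where phi: "\<forall>s\<in>linf_plus. \<forall>b\<in>linf_plus.
        (\<forall>i. s i \<le> max (b i) (Gam Ii gam mu s i)) \<longrightarrow> nrm s \<le> \<phi> (nrm b)"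
    using MBI unfolding oplus_MBI_def by blast
  have bl: "(\<lambda>_::'i. r) \<in> linf_plus" using r by (auto intro!: linf_plusI)
  have "(Gam_hat Ii gam mu ^^ n) (\<lambda>_. r) i \<le> \<phi> r" for n i
  proof -
    have "nrm ((Gam_hat Ii gam mu ^^ n) (\<lambda>_. r)) \<le> \<phi> (nrm (\<lambda>_::'i. r))"
      by (rule phi[rule_format, OF it_lp[OF r, of n] bl]) (use it_le_max[OF r, of n] in simp)
    then show ?thesis using nrm_ge[OF it_lp[OF r, of n], of i] r by (simp add: nrm_const)
  qed
  then show ?thesis by blast
qed

lemma ss_props: assumes MBI: "oplus_MBI Ii gam mu" and r: "0 \<le> r"
  shows "\<And>n i. (Gam_hat Ii gam mu ^^ n) (\<lambda>_. r) i \<le> sigma_star Ii gam mu r i"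
    and "sigma_star Ii gam mu r \<in> linf_plus"
    and "\<And>i. sigma_star Ii gam mu r i = max r (Gam Ii gam mu (sigma_star Ii gam mu r) i)"
    and "\<And>s. s \<in> linf_plus \<Longrightarrow> (\<And>i. r \<le> s i) \<Longrightarrow> (\<And>i. Gam Ii gam mu s i \<le> s i) \<Longrightarrow>
          sigma_star Ii gam mu r i \<le> s i"
proof -
  define it where "it n = (Gam_hat Ii gam mu ^^ n) (\<lambda>_. r)" for n
  obtain B where B: "\<And>n i. it n i \<le> B" using it_bdd[OF MBI r] unfolding it_def by blast
  have ss: "sigma_star Ii gam mu r i = (SUP n. it n i)" for i unfolding sigma_star_def it_def by simp
  have bdd: "bdd_above (range (\<lambda>n. it n i))" for i using B by (auto intro!: bdd_aboveI2)
  show up: "\<And>n i. (Gam_hat Ii gam mu ^^ n) (\<lambda>_. r) i \<le> sigma_star Ii gam mu r i"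
    unfolding ss it_def[symmetric] by (rule cSUP_upper) (use bdd in auto)
  have ile: "it n i \<le> sigma_star Ii gam mu r i" for n i using up unfolding it_def .
  have sB: "sigma_star Ii gam mu r i \<le> B" for i unfolding ss by (rule cSUP_least) (use B in auto)
  have sr: "r \<le> sigma_star Ii gam mu r i" for i using ile[of 0 i] unfolding it_def by simp
  show sl: "sigma_star Ii gam mu r \<in> linf_plus"
    by (rule linf_plusI[of _ B]) (use sr r sB in \<open>auto intro: order_trans\<close>)
  have itl: "it n \<in> linf_plus" for n unfolding it_def by (rule it_lp[OF r])
  have lim: "(\<lambda>n. it n j) \<longlonglongrightarrow> sigma_star Ii gam mu r j" for j
    unfolding ss by (rule LIMSEQ_incseq_SUP[OF bdd]) (rule incseq_SucI, unfold it_def, rule it_suc)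
  show "sigma_star Ii gam mu r i = max r (Gam Ii gam mu (sigma_star Ii gam mu r) i)" for i
  proof (rule antisym)
    have "it n i \<le> max r (Gam Ii gam mu (sigma_star Ii gam mu r) i)" for n
    proof -
      have "Gam Ii gam mu (it n) i \<le> Gam Ii gam mu (sigma_star Ii gam mu r) i"
        by (rule Gam_mono) (use linf_plusD[OF itl] ile in auto)
      then show ?thesis using it_le_max[OF r, of n i] unfolding it_def by linarith
    qed
    then show "sigma_star Ii gam mu r i \<le> max r (Gam Ii gam mu (sigma_star Ii gam mu r) i)"
      unfolding ss by (intro cSUP_least) auto
    have "Gam Ii gam mu (sigma_star Ii gam mu r) i \<le> sigma_star Ii gam mu r i"
    proof (rule field_le_epsilon)
      fix e :: real assume e: "0 < e"
      obtain N where N: "\<forall>n\<ge>N. \<bar>Gam Ii gam mu (it n) i - Gam Ii gam mu (sigma_star Ii gam mu r) i\<bar> \<le> e"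
        using Gam_cont[OF itl sl lim e] by blast
      have "Gam Ii gam mu (it N) i \<le> it (Suc N) i" unfolding it_def Gam_hat_def by simp
      then show "Gam Ii gam mu (sigma_star Ii gam mu r) i \<le> sigma_star Ii gam mu r i + e"
        using N ile[of "Suc N" i] by force
    qed
    then show "max r (Gam Ii gam mu (sigma_star Ii gam mu r) i) \<le> sigma_star Ii gam mu r i"
      using sr by simp
  qed
  show "\<And>s. s \<in> linf_plus \<Longrightarrow> (\<And>i. r \<le> s i) \<Longrightarrow> (\<And>i. Gam Ii gam mu s i \<le> s i) \<Longrightarrow>
          sigma_star Ii gam mu r i \<le> s i"
    unfolding ss by (rule cSUP_least) (auto simp: it_def intro: it_below[OF r])
qed


lemma zero_sol: assumes MBI: "oplus_MBI Ii gam mu" and s: "s \<in> linf_plus"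
  and fx: "\<And>i. s i \<le> max 0 (Gam Ii gam mu s i)"
  shows "s = (\<lambda>_. 0)"
proof -
  obtain \<phi> where phi: "class_Kinf \<phi>" "\<forall>s\<in>linf_plus. \<forall>b\<in>linf_plus.
        (\<forall>i. s i \<le> max (b i) (Gam Ii gam mu s i)) \<longrightarrow> nrm s \<le> \<phi> (nrm b)"
    using MBI unfolding oplus_MBI_def by blast
  have bl: "(\<lambda>_::'i. 0::real) \<in> linf_plus" by (auto intro!: linf_plusI)
  have "nrm s \<le> \<phi> (nrm (\<lambda>_::'i. 0::real))"
    by (rule phi(2)[rule_format, OF s bl]) (use fx in simp)
  then have "nrm s \<le> 0" using phi(1) unfolding class_Kinf_def class_K_def by (simp add: nrm_const)
  then have "s i = 0" for i using nrm_ge[OF s, of i] linf_plusD[OF s, of i] by simp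
  then show ?thesis by auto
qed

lemma Grho_lp: assumes rho: "class_K \<rho>" and x: "x \<in> linf_plus"
  shows "Gam_rho Ii gam mu \<rho> x \<in> linf_plus" and "\<And>i. Gam Ii gam mu x i \<le> Gam_rho Ii gam mu \<rho> x i"
proof -
  have gl: "Gam Ii gam mu x \<in> linf_plus" by (rule Gam_lp[OF x])
  obtain D where D: "0 \<le> D" "\<forall>i. Gam Ii gam mu x i \<le> D" using linf_plus_bnd[OF gl] by blast
  have g0: "0 \<le> Gam Ii gam mu x i" for i using linf_plusD[OF gl] .
  have r0: "0 \<le> \<rho> (Gam Ii gam mu x i)" for i using classK_nonneg[OF rho g0] .
  have rD: "\<rho> (Gam Ii gam mu x i) \<le> \<rho> D" for i using classK_mono[OF rho g0] D by auto
  show "Gam_rho Ii gam mu \<rho> x \<in> linf_plus" unfolding Gam_rho_def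
  proof (rule linf_plusI[of _ "D + \<rho> D"])
    fix i show "0 \<le> Gam Ii gam mu x i + \<rho> (Gam Ii gam mu x i)" using g0[of i] r0[of i] by linarith
    show "Gam Ii gam mu x i + \<rho> (Gam Ii gam mu x i) \<le> D + \<rho> D" using D(2)[rule_format, of i] rD[of i] by linarith
  qed
  show "\<And>i. Gam Ii gam mu x i \<le> Gam_rho Ii gam mu \<rho> x i" unfolding Gam_rho_def using r0 by auto
qed


lemma uniq:
  assumes MBI: "oplus_MBI Ii gam mu"
    and rho: "\<exists>\<rho>. class_Kinf \<rho> \<and> UGAS (Gam_rho Ii gam mu \<rho>)"
    and inv_eq: "ptw_equicont {inv_into {0..} (gam i j) | i j. j \<in> Ii i}"
    and zeta: "\<exists>\<zeta>. class_Kinf \<zeta> \<and>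
       (\<forall>i. \<forall>j\<in>Ii i. \<forall>s1\<in>linf_plus. \<forall>s2\<in>linf_plus. (\<forall>k. s1 k \<le> s2 k) \<longrightarrow>
          real_of_ereal (mu i (restr (Ii i) s2)) - real_of_ereal (mu i (restr (Ii i) s1))
            \<ge> \<zeta> (s2 j - s1 j))"
    and cont: "\<forall>r0\<ge>0. \<forall>\<epsilon>>0. \<exists>\<delta>>0. \<forall>r\<ge>0. \<bar>r - r0\<bar> \<le> \<delta> \<longrightarrow>
       nrm (\<lambda>i. sigma_star Ii gam mu r i - sigma_star Ii gam mu r0 i) \<le> \<epsilon>"
    and r: "0 < r" and s: "s \<in> linf_plus" and fx: "\<And>i. s i = max r (Gam Ii gam mu s i)"
  shows "s = sigma_star Ii gam mu r"
proof -
  let ?G = "Gam Ii gam mu"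
  let ?ss = "sigma_star Ii gam mu"
  have r0: "0 \<le> r" using r by simp
  have ssl: "\<And>r'. 0 \<le> r' \<Longrightarrow> ?ss r' \<in> linf_plus" using ss_props(2)[OF MBI] by blast
  have ssfx: "\<And>r' i. 0 \<le> r' \<Longrightarrow> ?ss r' i = max r' (?G (?ss r') i)" using ss_props(3)[OF MBI] by blast
  have sn: "0 \<le> s i" for i using linf_plusD[OF s] .
  have sr: "r \<le> s i" for i using fx[of i] by simp
  have sG: "?G s i \<le> s i" for i using fx[of i] by simp
  have sig_le: "?ss r i \<le> s i" for i by (rule ss_props(4)[OF MBI r0 s sr sG])
  define Ms where "Ms = nrm s"
  have sM: "s i \<le> Ms" for i unfolding Ms_def by (rule nrm_ge[OF s])
  define S where "S = {r'. r \<le> r' \<and> (\<forall>i. s i \<le> ?ss r' i)}"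
  have r1S: "max r Ms \<in> S"
  proof -
    have "s i \<le> ?ss (max r Ms) i" for i
      using ssfx[of "max r Ms" i] sM[of i] r0 by (simp add: max_def split: if_splits)
    then show ?thesis unfolding S_def by auto
  qed
  have Sne: "S \<noteq> {}" using r1S by blast
  have Sbdd: "bdd_below S" unfolding S_def by (auto intro: bdd_belowI)
  define rs where "rs = Inf S"
  have rrs: "r \<le> rs" unfolding rs_def by (rule cInf_greatest[OF Sne]) (auto simp: S_def)
  have rs0: "0 \<le> rs" using rrs r0 by linarith
  have rsS: "s i \<le> ?ss rs i" for i
  proof (rule field_le_epsilon)
    fix e :: real assume e: "0 < e"
    obtain \<delta> where d: "\<delta> > 0" "\<forall>r'\<ge>0. \<bar>r' - rs\<bar> \<le> \<delta> \<longrightarrow> nrm (\<lambda>i. ?ss r' i - ?ss rs i) \<le> e"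
      using cont[rule_format, OF rs0 e] by blast
    have "Inf S < rs + \<delta>" using d(1) rs_def by simp
    then obtain r' where r': "r' \<in> S" "r' < rs + \<delta>" using cInf_less_iff[OF Sne Sbdd] by blast
    have "rs \<le> r'" unfolding rs_def by (rule cInf_lower[OF r'(1) Sbdd])
    then have r'0: "0 \<le> r'" using rs0 by linarith
    have "nrm (\<lambda>i. ?ss r' i - ?ss rs i) \<le> e" using d(2) r' \<open>rs \<le> r'\<close> r'0 by auto
    moreover have "\<bar>?ss r' i - ?ss rs i\<bar> \<le> nrm (\<lambda>i. ?ss r' i - ?ss rs i)"
      by (rule nrm_diff_ge[OF ssl[OF r'0] ssl[OF rs0]])
    moreover have "s i \<le> ?ss r' i" using r'(1) unfolding S_def by blast
    ultimately show "s i \<le> ?ss rs i + e" by linarith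
  qed
  show ?thesis
  proof (cases "rs = r")
    case True
    then show ?thesis using rsS sig_le by (intro ext antisym) auto
  next
    case False
    then have rlt: "r < rs" using rrs by simp
    define sg where "sg = ?ss rs"
    have sgl: "sg \<in> linf_plus" unfolding sg_def by (rule ssl[OF rs0])
    have sgrs: "rs \<le> sg i" for i using ssfx[OF rs0, of i] unfolding sg_def by simp
    have sgG: "?G sg i \<le> sg i" for i using ssfx[OF rs0, of i] unfolding sg_def by simp
    have ssg: "s i \<le> sg i" for i using rsS unfolding sg_def .
    define c where "c = rs - r"
    have c0: "0 < c" unfolding c_def using rlt by simp
    obtain \<rho> where rh: "class_Kinf \<rho>" "UGAS (Gam_rho Ii gam mu \<rho>)" using rho by blast
    have rhK: "class_K \<rho>" using rh(1) unfolding class_Kinf_def by blast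
    obtain \<beta> where bt: "class_KL \<beta>" "\<forall>x\<in>linf_plus. \<forall>n::nat. nrm ((Gam_rho Ii gam mu \<rho> ^^ n) x) \<le> \<beta> (nrm x) (real n)"
      using rh(2) unfolding UGAS_def by blast
    have Mpos: "0 < Ms" using sM[of undefined] sr[of undefined] r by linarith
    have "((\<beta> Ms) \<longlongrightarrow> 0) at_top" using bt(1) Mpos unfolding class_KL_def by blast
    then have "eventually (\<lambda>t. \<beta> Ms t < r) at_top" using r by (rule order_tendstoD(2))
    then obtain T where T: "\<And>t. t \<ge> T \<Longrightarrow> \<beta> Ms t < r" unfolding eventually_at_top_linorder by blast
    define N where "N = nat \<lceil>T\<rceil>"
    have NT: "T \<le> real N" unfolding N_def by linarith
    have itl: "(?G ^^ k) s \<in> linf_plus \<and> (\<forall>i. (?G ^^ k) s i \<le> (Gam_rho Ii gam mu \<rho> ^^ k) s i)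
               \<and> (Gam_rho Ii gam mu \<rho> ^^ k) s \<in> linf_plus" for k
    proof (induction k)
      case 0
      then show ?case using s by simp
    next
      case (Suc k)
      define x where "x = (?G ^^ k) s"
      define y where "y = (Gam_rho Ii gam mu \<rho> ^^ k) s"
      have xl: "x \<in> linf_plus" and yl: "y \<in> linf_plus" and xy: "\<And>i. x i \<le> y i"
        using Suc.IH unfolding x_def y_def by auto
      have "?G x \<in> linf_plus" by (rule Gam_lp[OF xl])
      moreover have "?G x i \<le> Gam_rho Ii gam mu \<rho> y i" for i
      proof -
        have "?G x i \<le> ?G y i" by (rule Gam_mono) (use linf_plusD[OF xl] xy in auto)
        also have "\<dots> \<le> Gam_rho Ii gam mu \<rho> y i" by (rule Grho_lp(2)[OF rhK yl])
        finally show ?thesis .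
      qed
      moreover have "Gam_rho Ii gam mu \<rho> y \<in> linf_plus" by (rule Grho_lp(1)[OF rhK yl])
      ultimately show ?case unfolding x_def y_def by simp
    qed
    have GNr: "(?G ^^ N) s i < r" for i
    proof -
      have "(?G ^^ N) s i \<le> (Gam_rho Ii gam mu \<rho> ^^ N) s i" using itl by blast
      also have "\<dots> \<le> nrm ((Gam_rho Ii gam mu \<rho> ^^ N) s)" by (rule nrm_ge) (use itl in blast)
      also have "\<dots> \<le> \<beta> Ms (real N)" using bt(2) s unfolding Ms_def by blast
      also have "\<dots> < r" using T NT by blast
      finally show ?thesis .
    qed
    define A0 where "A0 = {i. ?G s i \<le> r}"
    define A where "A k = ((\<lambda>X. X \<union> {i. \<exists>j\<in>Ii i. j \<in> X}) ^^ k) A0" for k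
    have A_Suc: "A (Suc k) = A k \<union> {i. \<exists>j\<in>Ii i. j \<in> A k}" for k unfolding A_def by simp
    have A_0: "A 0 = A0" unfolding A_def by simp
    have A0k: "A0 \<subseteq> A k" for k
      by (induction k) (auto simp: A_Suc A_0)
    have cl1: "i \<notin> A k \<Longrightarrow> s i \<le> (?G ^^ k) s i" for k i
    proof (induction k arbitrary: i)
      case 0
      then show ?case by simp
    next
      case (Suc k)
      have iA: "i \<notin> A k" and jA: "\<And>j. j \<in> Ii i \<Longrightarrow> j \<notin> A k" using Suc.prems A_Suc by auto
      have "i \<notin> A0" using A0k iA by blast
      then have si: "s i = ?G s i" using fx[of i] unfolding A0_def by simp
      have xl: "(?G ^^ k) s \<in> linf_plus" using itl by blast
      define z where "z = (\<lambda>j. min (s j) ((?G ^^ k) s j))"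
      have "?G s i = ?G z i" by (rule Gam_local) (use Suc.IH jA in \<open>auto simp: z_def min_def\<close>)
      also have "\<dots> \<le> ?G ((?G ^^ k) s) i"
        by (rule Gam_mono) (use sn linf_plusD[OF xl] in \<open>auto simp: z_def\<close>)
      finally show ?case using si by simp
    qed
    have allA: "i \<in> A N" for i
    proof (rule ccontr)
      assume "i \<notin> A N"
      then have "s i \<le> (?G ^^ N) s i" by (rule cl1)
      then show False using GNr[of i] sr[of i] by linarith
    qed
    have M0: "0 \<le> Ms" using Mpos by simp
    have "\<forall>\<eta>. \<exists>m. \<eta> > 0 \<longrightarrow> m > 0 \<and> (\<forall>i. \<forall>j\<in>Ii i. \<forall>a. 0 \<le> a \<and> a \<le> Ms \<longrightarrow> m \<le> gam i j (a+\<eta>) - gam i j a)"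
      using gap[OF inv_eq M0] by blast
    then obtain mf where mf: "\<And>\<eta>. \<eta> > 0 \<Longrightarrow> mf \<eta> > 0 \<and> (\<forall>i. \<forall>j\<in>Ii i. \<forall>a. 0 \<le> a \<and> a \<le> Ms \<longrightarrow> mf \<eta> \<le> gam i j (a+\<eta>) - gam i j a)"
      by metis
    obtain \<zeta> where zt: "class_Kinf \<zeta>" "\<forall>i. \<forall>j\<in>Ii i. \<forall>s1\<in>linf_plus. \<forall>s2\<in>linf_plus. (\<forall>k. s1 k \<le> s2 k) \<longrightarrow>
          real_of_ereal (mu i (restr (Ii i) s2)) - real_of_ereal (mu i (restr (Ii i) s1))
            \<ge> \<zeta> (s2 j - s1 j)" using zeta by blast
    have ztK: "class_K \<zeta>" using zt(1) unfolding class_Kinf_def by blast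
    define eta where "eta k = ((\<lambda>x. min x (\<zeta> (mf x))) ^^ k) c" for k
    have eta_Suc: "eta (Suc k) = min (eta k) (\<zeta> (mf (eta k)))" for k unfolding eta_def by simp
    have eta_0: "eta 0 = c" unfolding eta_def by simp
    have eta_pos: "0 < eta k" for k
    proof (induction k)
      case 0 then show ?case using c0 eta_0 by simp
    next
      case (Suc k)
      have "0 < mf (eta k)" using mf[OF Suc.IH] by blast
      then have "0 < \<zeta> (mf (eta k))" by (rule classK_pos[OF ztK])
      then show ?case using Suc.IH eta_Suc by simp
    qed
    have eta_c: "eta k \<le> c" for k
      by (induction k) (auto simp: eta_0 eta_Suc)
    have cl2: "i \<in> A k \<Longrightarrow> eta k \<le> sg i - s i" for k i
    proof (induction k arbitrary: i)
      case 0
      then have "?G s i \<le> r" using A_0 unfolding A0_def by simp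
      then have "s i = r" using fx[of i] by simp
      then show ?case using sgrs[of i] eta_0 unfolding c_def by simp
    next
      case (Suc k)
      show ?case
      proof (cases "i \<in> A k")
        case True
        then show ?thesis using Suc.IH[of i] eta_Suc by simp
      next
        case False
        then obtain j where j: "j \<in> Ii i" "j \<in> A k" using Suc.prems A_Suc by auto
        show ?thesis
        proof (cases "?G s i \<le> r")
          case True
          then have "s i = r" using fx[of i] by simp
          then show ?thesis using sgrs[of i] eta_c[of "Suc k"] unfolding c_def by simp
        next
          case False
          then have si: "s i = ?G s i" using fx[of i] by simp
          have gK: "class_K (gam i j)" by (rule g_K[OF j(1)])
          have ul1: "uv i s \<in> linf_plus" by (rule uv_lp) (rule sn)
          have ul2: "uv i sg \<in> linf_plus" by (rule uv_lp) (use linf_plusD[OF sgl] in auto)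
          have ule: "\<forall>k. uv i s k \<le> uv i sg k" unfolding uv_def
            using g_K classK_mono sn ssg by auto
          have "\<zeta> (uv i sg j - uv i s j) \<le>
              real_of_ereal (mu i (restr (Ii i) (uv i sg))) - real_of_ereal (mu i (restr (Ii i) (uv i s)))"
            using zt(2) j(1) ul1 ul2 ule by blast
          then have z1: "\<zeta> (gam i j (sg j) - gam i j (s j)) \<le> ?G sg i - ?G s i"
            unfolding restr_uv Gam_uv[symmetric] using j(1) by (simp add: uv_def)
          have ih: "eta k \<le> sg j - s j" using Suc.IH[OF j(2)] .
          have ep: "0 < eta k" by (rule eta_pos)
          have "gam i j (s j + eta k) \<le> gam i j (sg j)"
            using classK_mono[OF gK, of "s j + eta k" "sg j"] sn[of j] ep ih by simp
          moreover have "mf (eta k) \<le> gam i j (s j + eta k) - gam i j (s j)"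
            using mf[OF ep] j(1) sn[of j] sM[of j] by blast
          ultimately have dd: "mf (eta k) \<le> gam i j (sg j) - gam i j (s j)" by linarith
          have mp: "0 < mf (eta k)" using mf[OF ep] by blast
          have "\<zeta> (mf (eta k)) \<le> \<zeta> (gam i j (sg j) - gam i j (s j))"
            by (rule classK_mono[OF ztK]) (use mp dd in auto)
          then have "\<zeta> (mf (eta k)) \<le> sg i - s i" using z1 si sgG[of i] by linarith
          then show ?thesis using eta_Suc[of k] by simp
        qed
      qed
    qed
    define e0 where "e0 = eta N"
    have e0p: "0 < e0" unfolding e0_def by (rule eta_pos)
    have gapall: "e0 \<le> sg i - s i" for i unfolding e0_def using cl2 allA by blast
    have e2: "0 < e0/2" using e0p by simp
    obtain \<delta> where d: "\<delta> > 0" "\<forall>r'\<ge>0. \<bar>r' - rs\<bar> \<le> \<delta> \<longrightarrow> nrm (\<lambda>i. ?ss r' i - ?ss rs i) \<le> e0/2"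
      using cont[rule_format, OF rs0 e2] by blast
    define r' where "r' = max r (rs - \<delta>)"
    have r'1: "r \<le> r'" "r' < rs" "\<bar>r' - rs\<bar> \<le> \<delta>" unfolding r'_def using rlt d(1) by auto
    have r'0: "0 \<le> r'" using r'1 r0 by linarith
    have nd: "nrm (\<lambda>i. ?ss r' i - ?ss rs i) \<le> e0/2" using d(2) r'0 r'1 by blast
    have "s i \<le> ?ss r' i" for i
    proof -
      have "\<bar>?ss r' i - ?ss rs i\<bar> \<le> nrm (\<lambda>i. ?ss r' i - ?ss rs i)"
        by (rule nrm_diff_ge[OF ssl[OF r'0] ssl[OF rs0]])
      then show ?thesis using nd gapall[of i] unfolding sg_def by linarith
    qed
    then have "r' \<in> S" unfolding S_def using r'1 by blast
    then have "rs \<le> r'" unfolding rs_def by (rule cInf_lower[OF _ Sbdd])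
    then show ?thesis using r'1 by linarith
  qed
qed

end

theorem proposition3p16:
  fixes Ii :: "'i::countable \<Rightarrow> 'i set"
    and gam :: "'i \<Rightarrow> 'i \<Rightarrow> real \<Rightarrow> real"
    and mu :: "'i \<Rightarrow> ('i \<Rightarrow> real) \<Rightarrow> ereal"
  assumes gain: "gain_operator Ii gam mu"
    and MBI: "oplus_MBI Ii gam mu"
    and rho: "\<exists>\<rho>. class_Kinf \<rho> \<and> UGAS (Gam_rho Ii gam mu \<rho>)"
    and inv_eq: "ptw_equicont {inv_into {0..} (gam i j) | i j. j \<in> Ii i}"
    and zeta: "\<exists>\<zeta>. class_Kinf \<zeta> \<and>
       (\<forall>i. \<forall>j\<in>Ii i. \<forall>s1\<in>linf_plus. \<forall>s2\<in>linf_plus. (\<forall>k. s1 k \<le> s2 k) \<longrightarrow>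
          real_of_ereal (mu i (restr (Ii i) s2)) - real_of_ereal (mu i (restr (Ii i) s1))
            \<ge> \<zeta> (s2 j - s1 j))"
    and cont: "\<forall>r0\<ge>0. \<forall>\<epsilon>>0. \<exists>\<delta>>0. \<forall>r\<ge>0. \<bar>r - r0\<bar> \<le> \<delta> \<longrightarrow>
       nrm (\<lambda>i. sigma_star Ii gam mu r i - sigma_star Ii gam mu r0 i) \<le> \<epsilon>"
  shows "\<forall>r\<ge>0. \<exists>!s. s \<in> linf_plus \<and> s = (\<lambda>i. max r (Gam Ii gam mu s i))"
proof (intro allI impI)
  fix r :: real assume r0: "0 \<le> r"
  let ?ss = "sigma_star Ii gam mu r"
  have sol: "?ss \<in> linf_plus \<and> ?ss = (\<lambda>i. max r (Gam Ii gam mu ?ss i))"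
    using ss_props(2,3)[OF gain MBI r0] by auto
  have un: "s = ?ss" if s: "s \<in> linf_plus" and fx: "s = (\<lambda>i. max r (Gam Ii gam mu s i))" for s
  proof (cases "r = 0")
    case True
    have fx': "\<And>i. s i \<le> max 0 (Gam Ii gam mu s i)" using fx True by (metis order_refl)
    have fs: "\<And>i. ?ss i \<le> max 0 (Gam Ii gam mu ?ss i)" using sol True by (metis order_refl)
    have "s = (\<lambda>_. 0)" by (rule zero_sol[OF gain MBI s fx'])
    moreover have "?ss = (\<lambda>_. 0)" by (rule zero_sol[OF gain MBI _ fs]) (use sol in blast)
    ultimately show ?thesis by simp
  next
    case False
    then have "0 < r" using r0 by simp
    have fxi: "\<And>i. s i = max r (Gam Ii gam mu s i)" using fx by (metis)
    show ?thesis by (rule uniq[OF gain MBI rho inv_eq zeta cont \<open>0 < r\<close> s fxi])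
  qed
  show "\<exists>!s. s \<in> linf_plus \<and> s = (\<lambda>i. max r (Gam Ii gam mu s i))"
    using sol un by blast
qed

end
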